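(* Let $\beta>0$, $f:[-1,1]\to\mathbb{R}$ any function, $g(r)=\frac12\log(1-r^2)+\frac{\beta^2}{2}(1-r^2)^2$ and $\tilde{\mathcal{B}}(\alpha,r)=f(r\alpha)+\sqrt2\beta r^2\sqrt{1-\alpha^2}+g(r)$. Then $r\mapsto\tilde{\mathcal{B}}(0,r)$ is strictly decreasing on $[0,1)$. *)

theory Defs
  imports Complex_Main
begin

definition g_fun :: "real \<Rightarrow> real \<Rightarrow> real" where
  "g_fun \<beta> r = 1/2 * ln (1 - r^2) + \<beta>^2 / 2 * (1 - r^2)^2"

definition Btilde :: "(real \<Rightarrow> real) \<Rightarrow> real \<Rightarrow> real \<Rightarrow> real \<Rightarrow> real" where
  "Btilde f \<beta> \<alpha> r = f (r * \<alpha>) + sqrt 2 * \<beta> * r^2 * sqrt (1 - \<alpha>^2) + g_fun \<beta> r"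

end

theory Submission
  imports Defs
begin

lemma ln_gt: fixes x :: real assumes "x > 1" shows "ln x > 2*(x-1)/(x+1)"
proof -
  let ?p = "\<lambda>x::real. ln x - 2*(x-1)/(x+1)"
  have "?p 1 < ?p x"
  proof (rule DERIV_pos_imp_increasing_open[OF assms])
    fix y :: real assume y: "1 < y" "y < x"
    have "(?p has_real_derivative (1/y - 4/(y+1)^2)) (at y)"
      using y by (auto intro!: derivative_eq_intros simp: field_simps power2_eq_square)
    moreover have "1/y - 4/(y+1)^2 > 0"
    proof -
      have "0 < (y-1)^2" using y by simp
      hence "4*y < (y+1)^2" by (simp add: power2_eq_square algebra_simps)
      hence "4/(y+1)^2 < 1/y" using y by (simp add: divide_simps)
      thus ?thesis by simp
    qed
    ultimately show "\<exists>y'. (?p has_real_derivative y') (at y) \<and> 0 < y'" by blast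
  next
    show "continuous_on {1..x} ?p"
      by (intro continuous_intros) auto
  qed
  thus ?thesis by simp
qed

theorem lemma5p4:
  fixes \<beta> :: real and f :: "real \<Rightarrow> real"
  assumes "\<beta> > 0"
  shows "\<forall>r s. 0 \<le> r \<and> r < s \<and> s < 1 \<longrightarrow> Btilde f \<beta> 0 s < Btilde f \<beta> 0 r"
proof (intro allI impI)
  fix r s :: real assume h: "0 \<le> r \<and> r < s \<and> s < 1"
  define a where "a = 1 - s^2"
  define b where "b = 1 - r^2"
  have rs: "r^2 < s^2" using h by (intro power_strict_mono) auto
  have s2: "s^2 < 1" using h by (simp add: abs_square_less_1)
  have ab: "0 < a" "a < b" "b \<le> 1" using rs s2 by (auto simp: a_def b_def)
  have sq: "sqrt 2 * sqrt 2 = (2::real)" by simp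
  have key1: "(b-a)*(2*sqrt 2*\<beta> - \<beta>^2*(a+b)) \<le> 2*(b-a)/(a+b)"
  proof -
    have "(2*sqrt 2*\<beta> - \<beta>^2*(a+b)) \<le> 2/(a+b)"
    proof -
      have "(a+b)*(2*sqrt 2*\<beta> - \<beta>^2*(a+b)) \<le> 2"
      proof -
        have "0 \<le> (\<beta>*(a+b) - sqrt 2)^2" by simp
        thus ?thesis by (simp add: power2_eq_square algebra_simps sq)
      qed
      thus ?thesis using ab by (simp add: field_simps)
    qed
    hence "(b-a)*(2*sqrt 2*\<beta> - \<beta>^2*(a+b)) \<le> (b-a)*(2/(a+b))" using ab by (intro mult_left_mono) auto
    thus ?thesis by (simp add: algebra_simps)
  qed
  have key2: "ln (b/a) > 2*(b-a)/(a+b)"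
  proof -
    have "ln (b/a) > 2*(b/a-1)/(b/a+1)" using ab by (intro ln_gt) simp
    also have "2*(b/a-1)/(b/a+1) = 2*(b-a)/(a+b)"
    proof -
      have e1: "b/a - 1 = (b-a)/a" "b/a+1 = (a+b)/a" using ab by (auto simp: field_simps)
      show ?thesis unfolding e1 using ab by simp
    qed
    finally show ?thesis .
  qed
  have lnd: "ln (b/a) = ln b - ln a" using ab by (simp add: ln_div)
  have "sqrt 2 * \<beta> * s^2 + 1/2 * ln a + \<beta>^2/2*a^2 < sqrt 2 * \<beta> * r^2 + 1/2 * ln b + \<beta>^2/2*b^2"
  proof -
    have "s^2 = 1 - a" "r^2 = 1 - b" by (auto simp: a_def b_def)
    moreover have "(b-a)*(2*sqrt 2*\<beta> - \<beta>^2*(a+b)) < ln b - ln a" using key1 key2 lnd by linarith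
    moreover have "(b-a)*(2*sqrt 2*\<beta> - \<beta>^2*(a+b)) = 2*(sqrt 2*\<beta>*(1-a)) - 2*(sqrt 2*\<beta>*(1-b)) + \<beta>^2*a^2 - \<beta>^2*b^2"
      by (simp add: algebra_simps power2_eq_square)
    ultimately show ?thesis by (simp only:)
  qed
  thus "Btilde f \<beta> 0 s < Btilde f \<beta> 0 r"
    by (simp add: Btilde_def g_fun_def a_def b_def)
qed

end
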